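(* Let $\mathbb{J}$ be a real symmetric $N\times N$ matrix with vanishing diagonal, and for $\boldsymbol\kappa\in\mathbb{R}^N$ put $\mathbb{J}(\boldsymbol\kappa)=\mathbb{J}+\operatorname{diag}(\kappa_1,\ldots,\kappa_N)$. (i) If $\mathbf{s}$ is a ground state of $\mathbb{J}$ and $\check{\boldsymbol\kappa}\in\mathbb{R}^N$ satisfies $\mathbb{J}(\check{\boldsymbol\kappa})\mathbf{s}=0$ (i.e. $\check{\boldsymbol\kappa}$ are Lagrange parameters of $\mathbf{s}$), then $\mathbb{J}(\check{\boldsymbol\kappa})\,G(\mathbf{s})=0$. (ii) Let $S\subseteq\mathbb{R}^N$ be a completely elliptic subspace such that $\mathcal{F}_S=\{G\in\mathcal{G}_N:\operatorname{range}G\subseteq S\}$ is a non-trivial closed face of $\mathcal{G}_N$, and let $S^\perp$ be the orthogonal complement of $S$. Then every positive semi-definite real symmetric $N\times N$ matrix $A$ with support (range) $S^\perp$ can be written as $A=\mathbb{J}'(\boldsymbol\kappa)$, where $\mathbb{J}'$ is the zero-diagonal matrix equal to $A$ off the diagonal and $\kappa_\mu=A_{\mu\mu}$, such that for every configuration $\mathbf{s}$ with $G(\mathbf{s})\in\mathcal{F}_S$, $\mathbf{s}$ is a ground state of $\mathbb{J}'$ with Lagrange parameters $\boldsymbol\kappa$, i.e. $\mathbb{J}'(\boldsymbol\kappa)\mathbf{s}=0$. (iii) Let $G_0$ be a boundary point of $\mathcal{G}_N$ (i.e. $\operatorname{rank}G_0<N$) and let $\mathcal{F}_0$ be the closed face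 of $\mathcal{G}_N$ generated by $G_0$. Then $\mathcal{F}_0=\{G\in\mathcal{G}_N:\operatorname{range}G\subseteq S\}$ for some completely elliptic subspace $S\subseteq\mathbb{R}^N$. Moreover, let $\mathcal{C}(G_0)$ be the convex cone of all linear functionals $\ell$ on the space $\mathcal{L}_N$ of real symmetric $N\times N$ matrices with vanishing diagonal such that $\ell(G-G_0)\ge0$ for all $G\in\mathcal{G}_N$. Then $A\mapsto f(A)$, $f(A)(X)=\operatorname{Tr}(AX)$ for $X\in\mathcal{L}_N$, is an affine bijection from the cone of positive semi-definite real symmetric $N\times N$ matrices $A$ with range contained in $S^\perp$ onto $\mathcal{C}(G_0)$.
   Context: $\mathcal{G}_N$ is the set of real symmetric positive semi-definite $N\times N$ matrices with all diagonal entries equal to $1$. For $M\ge1$, a spin configuration is a real $N\times M$ matrix $\mathbf{s}$ whose rows $\mathbf{s}_\mu$ are unit vectors of $\mathbb{R}^M$; its Gram matrix is $G(\mathbf{s})=\mathbf{s}\mathbf{s}^\top\in\mathcal{G}_N$. The Heisenberg energy is $H(\mathbf{s})=\sum_{\mu,\nu=1}^N J_{\mu\nu}\,\mathbf{s}_\mu\cdot\mathbf{s}_\nu=\operatorname{Tr}(\mathbb{J}G(\mathbf{s}))$. A ground state of $\mathbb{J}$ is a configuration $\mathbf{s}$ at which $H$ attains its global minimum (equivalently, $G(\mathbf{s})$ minimizes $G\mapsto\operatorname{Tr}(\mathbb{J}G)$ over $\mathcal{G}_N$). A subspace $S\subseteq\mathbb{R}^N$ of dimension $M$ is completely elliptic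 if there is an $N\times M$ matrix whose columns lie in $S$, whose rows are unit vectors and whose rank is $M$. A face of a convex set $C$ is a convex subset $F\subseteq C$ such that $x=\alpha y+(1-\alpha)z$ with $x\in F$, $y,z\in C$, $0<\alpha<1$ implies $y,z\in F$; the face generated by a point is the smallest face containing it; a face is non-trivial if it differs from $\emptyset$ and $\mathcal{G}_N$. *)

theory Defs
  imports "HOL-Analysis.Analysis"
begin

(* real symmetric N x N matrices; N = CARD('n) *)
definition sym_mat :: "real^'n^'n \<Rightarrow> bool" where
  "sym_mat A \<longleftrightarrow> transpose A = A"

definition psd :: "real^'n^'n \<Rightarrow> bool" where
  "psd A \<longleftrightarrow> sym_mat A \<and> (\<forall>x. 0 \<le> x \<bullet> (A *v x))"

(* the set G_N *)
definition GN :: "(real^'n^'n) set" where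
  "GN = {G. psd G \<and> (\<forall>i. G $ i $ i = 1)}"

(* spin configuration: N x M matrix with unit rows, M = CARD('m) *)
definition spin_config :: "real^'m^'n \<Rightarrow> bool" where
  "spin_config s \<longleftrightarrow> (\<forall>\<mu>. norm (s $ \<mu>) = 1)"

definition Gram :: "real^'m^'n \<Rightarrow> real^'n^'n" where
  "Gram s = s ** transpose s"

definition heis_energy :: "real^'n^'n \<Rightarrow> real^'m^'n \<Rightarrow> real" where
  "heis_energy J s = (\<Sum>\<mu>\<in>UNIV. \<Sum>\<nu>\<in>UNIV. J $ \<mu> $ \<nu> * (s $ \<mu> \<bullet> s $ \<nu>))"

(* ground state: G(s) minimizes G \<mapsto> Tr(J G) over G_N *)
definition ground_state :: "real^'n^'n \<Rightarrow> real^'m^'n \<Rightarrow> bool" where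
  "ground_state J s \<longleftrightarrow> spin_config s \<and>
     (\<forall>G\<in>GN. trace (J ** Gram s) \<le> trace (J ** G))"

definition diagm :: "real^'n \<Rightarrow> real^'n^'n" where
  "diagm k = (\<chi> i j. if i = j then k $ i else 0)"

(* J(kappa) = J + diag(kappa) *)
definition Jk :: "real^'n^'n \<Rightarrow> real^'n \<Rightarrow> real^'n^'n" where
  "Jk J k = J + diagm k"

definition zero_diag :: "real^'n^'n \<Rightarrow> bool" where
  "zero_diag J \<longleftrightarrow> (\<forall>i. J $ i $ i = 0)"

(* completely elliptic subspace of dimension M = dim S: there is an N x M matrix
   (columns v 0, ..., v (M-1)) with columns in S, unit rows and rank M *)
definition completely_elliptic :: "(real^'n) set \<Rightarrow> bool" where
  "completely_elliptic S \<longleftrightarrow> subspace S \<and>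
     (\<exists>v :: nat \<Rightarrow> real^'n.
        (\<forall>j<dim S. v j \<in> S) \<and>
        (\<forall>\<mu>. (\<Sum>j<dim S. (v j $ \<mu>)\<^sup>2) = 1) \<and>
        dim (span (v ` {..<dim S})) = dim S)"

(* F_S = {G in G_N. range G \<subseteq> S} *)
definition face_of_subspace :: "(real^'n) set \<Rightarrow> (real^'n^'n) set" where
  "face_of_subspace S = {G \<in> GN. range ((*v) G) \<subseteq> S}"

(* face generated by a point: smallest face containing it *)
definition face_generated :: "(real^'n^'n) set \<Rightarrow> real^'n^'n \<Rightarrow> (real^'n^'n) set" where
  "face_generated C x = \<Inter>{F. F face_of C \<and> x \<in> F}"

(* L_N: real symmetric matrices with vanishing diagonal *)
definition LN :: "(real^'n^'n) set" where
  "LN = {X. sym_mat X \<and> zero_diag X}"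

(* linear functionals on L_N, represented as functions vanishing outside L_N *)
definition lin_functionals :: "(real^'n^'n \<Rightarrow> real) set" where
  "lin_functionals = {l. (\<forall>X\<in>LN. \<forall>Y\<in>LN. l (X + Y) = l X + l Y) \<and>
       (\<forall>c. \<forall>X\<in>LN. l (c *\<^sub>R X) = c * l X) \<and> (\<forall>X. X \<notin> LN \<longrightarrow> l X = 0)}"

(* the cone C(G0) *)
definition cone_C :: "real^'n^'n \<Rightarrow> (real^'n^'n \<Rightarrow> real) set" where
  "cone_C G0 = {l \<in> lin_functionals. \<forall>G\<in>GN. 0 \<le> l (G - G0)}"

(* f(A)(X) = Tr(A X) for X in L_N *)
definition tr_functional :: "real^'n^'n \<Rightarrow> (real^'n^'n \<Rightarrow> real)" where
  "tr_functional A = (\<lambda>X. if X \<in> LN then trace (A ** X) else 0)"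

end

theory Submission
  imports Defs
begin


lemma inner_mv_sym:
  fixes G :: "real^'n^'n"
  assumes "sym_mat G"
  shows "x \<bullet> (G *v y) = (G *v x) \<bullet> y"
proof -
  have t: "\<And>i j. G $ i $ j = G $ j $ i"
    using assms unfolding sym_mat_def by (metis transpose_def vec_lambda_beta)
  have "x \<bullet> (G *v y) = (\<Sum>i\<in>UNIV. \<Sum>j\<in>UNIV. x $ i * G $ i $ j * y $ j)"
    by (simp add: inner_vec_def matrix_vector_mult_def sum_distrib_left mult.assoc)
  also have "\<dots> = (\<Sum>j\<in>UNIV. \<Sum>i\<in>UNIV. x $ i * G $ i $ j * y $ j)"
    by (rule sum.swap)
  also have "\<dots> = (\<Sum>j\<in>UNIV. y $ j * (\<Sum>i\<in>UNIV. G $ j $ i * x $ i))"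
    by (simp add: sum_distrib_left t mult_ac)
  also have "\<dots> = (G *v x) \<bullet> y"
    by (simp add: inner_vec_def matrix_vector_mult_def mult.commute)
  finally show ?thesis .
qed

lemma psd_sym: "psd G \<Longrightarrow> sym_mat G" by (simp add: psd_def)
lemma psd_nonneg: "psd G \<Longrightarrow> 0 \<le> x \<bullet> (G *v x)" by (simp add: psd_def)

lemma psd_CS:
  fixes G :: "real^'n^'n"
  assumes "psd G"
  shows "(x \<bullet> (G *v y))^2 \<le> (x \<bullet> (G *v x)) * (y \<bullet> (G *v y))"
proof -
  define a where "a = x \<bullet> (G *v x)"
  define b where "b = x \<bullet> (G *v y)"
  define c where "c = y \<bullet> (G *v y)"
  have yx: "y \<bullet> (G *v x) = b"
    unfolding b_def using inner_mv_sym[OF psd_sym[OF assms]] by (metis inner_commute)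
  have q: "0 \<le> a + 2 * t * b + t^2 * c" for t
  proof -
    have "0 \<le> (x + t *\<^sub>R y) \<bullet> (G *v (x + t *\<^sub>R y))" using psd_nonneg[OF assms] .
    also have "\<dots> = a + 2 * t * b + t^2 * c"
      by (simp add: matrix_vector_right_distrib vec.scale inner_add_left inner_add_right
          a_def b_def c_def yx power2_eq_square algebra_simps)
    finally show ?thesis .
  qed
  have c0: "0 \<le> c" unfolding c_def using psd_nonneg[OF assms] .
  show ?thesis
  proof (cases "c = 0")
    case True
    have "b = 0"
    proof (rule ccontr)
      assume "b \<noteq> 0"
      have "0 \<le> a + 2 * (-(a+1)/(2*b)) * b + (-(a+1)/(2*b))^2 * c" by (rule q)
      also have "\<dots> = -1" using \<open>b \<noteq> 0\<close> True by (simp add: field_simps)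
      finally show False by simp
    qed
    then show ?thesis using True by (simp add: b_def[symmetric] c_def[symmetric])
  next
    case False
    then have cp: "c > 0" using c0 by simp
    have "0 \<le> a + 2 * (-b/c) * b + (-b/c)^2 * c" by (rule q)
    also have "\<dots> = a - b^2 / c" using cp by (simp add: field_simps power2_eq_square)
    finally have "b^2 / c \<le> a" by simp
    then have "b^2 \<le> a * c" using cp by (simp add: field_simps)
    then show ?thesis by (simp add: a_def b_def c_def)
  qed
qed

lemma psd_zero:
  fixes G :: "real^'n^'n"
  assumes "psd G" "x \<bullet> (G *v x) = 0"
  shows "G *v x = 0"
proof -
  have "(x \<bullet> (G *v (G *v x)))^2 \<le> 0"
    using psd_CS[OF assms(1), of x "G *v x"] assms(2) by simp
  then have "x \<bullet> (G *v (G *v x)) = 0" by simp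
  then have "(G *v x) \<bullet> (G *v x) = 0"
    using inner_mv_sym[OF psd_sym[OF assms(1)]] by metis
  then show ?thesis by simp
qed

definition outer :: "real^'n \<Rightarrow> real^'n^'n" where
  "outer v = (\<chi> i j. v $ i * v $ j)"

lemma mv_scaleR: "(A::real^'n^'m) *v (c *\<^sub>R x) = c *\<^sub>R (A *v x)"
  by (simp add: matrix_vector_mult_def vec_eq_iff sum_distrib_left mult_ac)

lemma outer_mv: "outer v *v y = (v \<bullet> y) *\<^sub>R v"
  by (simp add: vec_eq_iff outer_def matrix_vector_mult_def inner_vec_def sum_distrib_left mult_ac)

lemma sum_mv: "finite J \<Longrightarrow> (\<Sum>j\<in>J. (M j :: real^'n^'m)) *v y = (\<Sum>j\<in>J. M j *v y)"
  by (induction J rule: finite_induct) (simp_all add: matrix_vector_mult_add_rdistrib)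

lemma range_subspace: "subspace (range ((*v) (G::real^'n^'m)))"
  by (rule linear_subspace_image[OF matrix_vector_mul_linear subspace_UNIV])

lemma psd_factor:
  fixes G :: "real^'n^'n"
  assumes "psd G"
  shows "\<exists>K v. K \<le> dim (range ((*v) G)) \<and> (\<forall>j<K. v j \<in> range ((*v) G)) \<and>
            G = (\<Sum>j<K. outer (v j))"
  using assms
proof (induction "dim (range ((*v) G))" arbitrary: G rule: less_induct)
  case less
  note psdG = less.prems
  have symG: "\<And>i j. G $ i $ j = G $ j $ i"
    using psd_sym[OF psdG] unfolding sym_mat_def by (metis transpose_def vec_lambda_beta)
  show ?case
  proof (cases "\<forall>x. x \<bullet> (G *v x) = 0")
    case True
    then have "G = 0" using psd_zero[OF psdG] by (simp add: matrix_eq)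
    then show ?thesis by (intro exI[of _ 0]) auto
  next
    case False
    then obtain x where "x \<bullet> (G *v x) \<noteq> 0" by blast
    define q where "q = x \<bullet> (G *v x)"
    have qp: "q > 0" using psd_nonneg[OF psdG, of x] \<open>x \<bullet> (G *v x) \<noteq> 0\<close> by (simp add: q_def)
    define v where "v = (1 / sqrt q) *\<^sub>R (G *v x)"
    define G1 where "G1 = G - outer v"
    define R where "R = range ((*v) G)"
    have subR: "subspace R" unfolding R_def by (rule range_subspace)
    have "v = G *v ((1 / sqrt q) *\<^sub>R x)" by (simp add: v_def mv_scaleR)
    then have vR: "v \<in> R" unfolding R_def by auto
    have G1y: "G1 *v y = G *v y - (v \<bullet> y) *\<^sub>R v" for y
      by (simp add: G1_def matrix_vector_mult_diff_rdistrib outer_mv)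
    have vy: "v \<bullet> y = (1 / sqrt q) * (x \<bullet> (G *v y))" for y
      unfolding v_def using inner_mv_sym[OF psd_sym[OF psdG], of x y] by simp
    have sym1: "sym_mat G1"
      unfolding sym_mat_def G1_def by (simp add: vec_eq_iff transpose_def outer_def symG mult.commute)
    have psd1: "psd G1"
      unfolding psd_def
    proof (intro conjI sym1 allI)
      fix y
      have "(x \<bullet> (G *v y))^2 \<le> q * (y \<bullet> (G *v y))" using psd_CS[OF psdG, of x y] by (simp add: q_def)
      then have "(v \<bullet> y)^2 \<le> y \<bullet> (G *v y)"
        using qp by (simp add: vy power_mult_distrib power_divide field_simps)
      then show "0 \<le> y \<bullet> (G1 *v y)" by (simp add: G1y inner_diff_right power2_eq_square inner_commute)
    qed
    have sub: "range ((*v) G1) \<subseteq> R"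
    proof
      fix z assume "z \<in> range ((*v) G1)"
      then obtain y where "z = G1 *v y" by auto
      then show "z \<in> R" using subR vR unfolding G1y
        by (metis R_def rangeI subspace_diff subspace_scale)
    qed
    have G1x: "G1 *v x = 0"
    proof -
      have "v \<bullet> x = sqrt q"
        using qp by (simp add: vy q_def[symmetric] inner_commute real_div_sqrt)
      then show ?thesis using qp by (simp add: G1y v_def)
    qed
    have ne: "G *v x \<notin> range ((*v) G1)"
    proof
      assume "G *v x \<in> range ((*v) G1)"
      then obtain y where "G *v x = G1 *v y" by auto
      then have "q = x \<bullet> (G1 *v y)" by (simp add: q_def)
      also have "\<dots> = (G1 *v x) \<bullet> y" by (rule inner_mv_sym[OF sym1])
      finally show False using G1x qp by simp
    qed
    have "span (range ((*v) G1)) \<subset> span R"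
    proof -
      have e1: "span (range ((*v) G1)) = range ((*v) G1)" using range_subspace[of G1] by (simp add: span_eq_iff)
      have e2: "span R = R" using subR by (simp add: span_eq_iff)
      have "G *v x \<in> R" unfolding R_def by simp
      then show ?thesis unfolding e1 e2 using sub ne by blast
    qed
    then have dimlt: "dim (range ((*v) G1)) < dim R" by (rule dim_psubset)
    obtain K1 v1 where K1: "K1 \<le> dim (range ((*v) G1))" "\<forall>j<K1. v1 j \<in> range ((*v) G1)"
      "G1 = (\<Sum>j<K1. outer (v1 j))"
      using less.hyps[OF dimlt[unfolded R_def] psd1] by blast
    define w where "w = v1(K1 := v)"
    have "G = G1 + outer v" by (simp add: G1_def)
    also have "\<dots> = (\<Sum>j<Suc K1. outer (w j))"
      by (simp add: K1(3) w_def)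
    finally have eq: "G = (\<Sum>j<Suc K1. outer (w j))" .
    show ?thesis
    proof (intro exI conjI)
      show "Suc K1 \<le> dim (range ((*v) G))" using K1(1) dimlt unfolding R_def by simp
      show "\<forall>j<Suc K1. w j \<in> range ((*v) G)"
        using K1(2) sub vR unfolding R_def w_def by (auto simp: less_Suc_eq)
    qed (rule eq)
  qed
qed


lemma trace_mm: "trace ((A::real^'n^'n) ** G) = (\<Sum>i\<in>UNIV. \<Sum>k\<in>UNIV. A $ i $ k * G $ k $ i)"
  by (simp add: trace_def matrix_matrix_mult_def)

lemma trace_zero_mat: "trace (0::real^'n^'n) = 0"
  by (simp add: trace_def)

lemma tr_outer: "trace ((A::real^'n^'n) ** outer v) = v \<bullet> (A *v v)"
  by (simp add: trace_mm outer_def inner_vec_def matrix_vector_mult_def sum_distrib_left mult_ac)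

lemma mm_sum: "finite J \<Longrightarrow> (A::real^'n^'n) ** (\<Sum>j\<in>J. M j) = (\<Sum>j\<in>J. A ** M j)"
  by (induction J rule: finite_induct) (simp_all add: matrix_add_ldistrib)

lemma tr_sum: "finite J \<Longrightarrow> trace ((A::real^'n^'n) ** (\<Sum>j\<in>J. M j)) = (\<Sum>j\<in>J. trace (A ** M j))"
  by (induction J rule: finite_induct) (simp_all add: matrix_add_ldistrib trace_add trace_zero_mat)

lemma tr_add_left: "trace (((A::real^'n^'n) + B) ** G) = trace (A ** G) + trace (B ** G)"
  by (simp add: trace_mm sum.distrib distrib_right)

lemma if_mult_left: "(if P then (a::real) else 0) * c = (if P then a * c else 0)"
  by simp

lemma tr_diagm: "trace (diagm k ** (G::real^'n^'n)) = (\<Sum>i\<in>UNIV. k $ i * G $ i $ i)"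
  by (simp add: trace_mm diagm_def if_mult_left)

lemma mm_outer: "(A::real^'n^'n) ** outer v = (\<chi> i j. (A *v v) $ i * v $ j)"
  by (simp add: vec_eq_iff matrix_matrix_mult_def outer_def matrix_vector_mult_def sum_distrib_left sum_distrib_right mult_ac)

lemma tr_psd:
  fixes A G :: "real^'n^'n"
  assumes "psd A" "psd G"
  shows "0 \<le> trace (A ** G)"
proof -
  obtain K :: nat and v where "G = (\<Sum>j<K. outer (v j))" using psd_factor[OF assms(2)] by blast
  then have "trace (A ** G) = (\<Sum>j<K. v j \<bullet> (A *v v j))" by (simp add: tr_sum tr_outer)
  also have "\<dots> \<ge> 0" by (rule sum_nonneg) (use psd_nonneg[OF assms(1)] in auto)
  finally show ?thesis .
qed

lemma tr_psd_zero:
  fixes A G :: "real^'n^'n"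
  assumes "psd A" "psd G" "trace (A ** G) = 0"
  shows "A ** G = 0"
proof -
  obtain K :: nat and v where G: "G = (\<Sum>j<K. outer (v j))" using psd_factor[OF assms(2)] by blast
  then have "(\<Sum>j<K. v j \<bullet> (A *v v j)) = 0" using assms(3) by (simp add: tr_sum tr_outer)
  then have "\<forall>j\<in>{..<K}. v j \<bullet> (A *v v j) = 0"
    by (subst sum_nonneg_eq_0_iff[symmetric]) (use psd_nonneg[OF assms(1)] in auto)
  then have z: "\<And>j. j < K \<Longrightarrow> A *v v j = 0" using psd_zero[OF assms(1)] by blast
  have "A ** G = (\<Sum>j<K. A ** outer (v j))" by (simp add: G mm_sum)
  also have "\<dots> = (\<Sum>j<K. 0)" by (rule sum.cong) (auto simp: mm_outer z vec_eq_iff)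
  finally show ?thesis by simp
qed

lemma kill_S:
  fixes A :: "real^'n^'n"
  assumes "sym_mat A" "range ((*v) A) \<subseteq> orthogonal_comp S" "y \<in> S"
  shows "A *v y = 0"
proof -
  have "A *v (A *v y) \<in> orthogonal_comp S" using assms(2) by auto
  then have "y \<bullet> (A *v (A *v y)) = 0" using assms(3) by (auto simp: orthogonal_comp_def orthogonal_def)
  then have "(A *v y) \<bullet> (A *v y) = 0" using inner_mv_sym[OF assms(1)] by metis
  then show ?thesis by simp
qed

lemma mmT_zero:
  fixes M :: "real^'m^'n"
  assumes "M ** transpose M = 0"
  shows "M = 0"
proof -
  have "\<And>i. (\<Sum>k\<in>UNIV. M $ i $ k * M $ i $ k) = 0"
    using assms by (simp add: vec_eq_iff matrix_matrix_mult_def transpose_def)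
  then have "\<And>i k. M $ i $ k * M $ i $ k = 0"
    by (subst (asm) sum_nonneg_eq_0_iff) auto
  then show ?thesis by (simp add: vec_eq_iff)
qed

lemma part1:
  fixes J :: "real^'n^'n" and s :: "real^'m^'n"
  assumes "Jk J k ** s = 0"
  shows "Jk J k ** Gram s = 0"
  using assms by (simp add: Gram_def matrix_mul_assoc)


lemma sym_entry: "sym_mat G \<Longrightarrow> G $ i $ j = G $ j $ i"
  unfolding sym_mat_def by (metis transpose_def vec_lambda_beta)

lemma part2:
  fixes A :: "real^'n^'n" and s :: "real^'m^'n"
  assumes psdA: "psd A" and rA: "range ((*v) A) \<subseteq> orthogonal_comp S"
  defines "J' \<equiv> (\<chi> i j. if i = j then 0 else A $ i $ j)" and "k \<equiv> (\<chi> i. A $ i $ i)"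
  shows "A = Jk J' k \<and> sym_mat J' \<and> zero_diag J' \<and>
     (\<forall>s :: real^'m^'n. spin_config s \<and> Gram s \<in> face_of_subspace S \<longrightarrow>
              ground_state J' s \<and> Jk J' k ** s = 0)"
proof (intro conjI allI impI)
  show AJ: "A = Jk J' k" by (simp add: vec_eq_iff Jk_def diagm_def J'_def k_def)
  show "sym_mat J'"
    using sym_entry[OF psd_sym[OF psdA]] by (simp add: sym_mat_def J'_def vec_eq_iff transpose_def)
  show "zero_diag J'" by (simp add: zero_diag_def J'_def)
  fix s :: "real^'m^'n"
  assume "spin_config s \<and> Gram s \<in> face_of_subspace S"
  then have sc: "spin_config s" and gs: "Gram s \<in> GN" "range ((*v) (Gram s)) \<subseteq> S"
    by (auto simp: face_of_subspace_def)
  have AG: "A ** Gram s = 0"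
    unfolding matrix_eq
  proof
    fix x
    have "Gram s *v x \<in> S" using gs(2) by auto
    then have "A *v (Gram s *v x) = 0" by (rule kill_S[OF psd_sym[OF psdA] rA])
    then show "(A ** Gram s) *v x = 0 *v x" by (simp add: matrix_vector_mul_assoc)
  qed
  have "(A ** s) ** transpose (A ** s) = (A ** Gram s) ** transpose A"
    by (simp add: Gram_def matrix_transpose_mul matrix_mul_assoc)
  also have "\<dots> = 0" using AG by simp
  finally have As: "A ** s = 0" by (rule mmT_zero)
  from As AJ show "Jk J' k ** s = 0" by metis
  have trG: "trace (J' ** G) = trace (A ** G) - sum (($) k) UNIV" if "G \<in> GN" for G
  proof -
    have "trace (A ** G) = trace (J' ** G) + trace (diagm k ** G)"
      by (subst AJ) (simp add: Jk_def tr_add_left)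
    moreover have "trace (diagm k ** G) = sum (($) k) UNIV"
      using that by (simp add: tr_diagm GN_def)
    ultimately show ?thesis by simp
  qed
  show "ground_state J' s"
    unfolding ground_state_def
  proof (intro conjI ballI sc)
    fix G :: "real^'n^'n" assume G: "G \<in> GN"
    have "trace (A ** Gram s) = 0" using AG by (simp add: trace_zero_mat)
    moreover have "0 \<le> trace (A ** G)" using G psdA by (intro tr_psd) (auto simp: GN_def)
    ultimately show "trace (J' ** Gram s) \<le> trace (J' ** G)"
      using trG[OF G] trG[OF gs(1)] by simp
  qed
qed


lemma mv_comb: "(u *\<^sub>R (A::real^'n^'n) + v *\<^sub>R B) *v x = u *\<^sub>R (A *v x) + v *\<^sub>R (B *v x)"
  by (simp add: matrix_vector_mult_add_rdistrib scaleR_matrix_vector_assoc)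

lemma psd_comb:
  assumes "psd A" "psd B" "0 \<le> u" "0 \<le> v"
  shows "psd (u *\<^sub>R (A::real^'n^'n) + v *\<^sub>R B)"
  unfolding psd_def
proof (intro conjI allI)
  show "sym_mat (u *\<^sub>R A + v *\<^sub>R B)"
    using sym_entry[OF psd_sym[OF assms(1)]] sym_entry[OF psd_sym[OF assms(2)]]
    unfolding sym_mat_def by (simp add: vec_eq_iff transpose_def)
  fix x
  have "0 \<le> u * (x \<bullet> (A *v x)) + v * (x \<bullet> (B *v x))"
    using assms psd_nonneg by (intro add_nonneg_nonneg mult_nonneg_nonneg) auto
  then show "0 \<le> x \<bullet> ((u *\<^sub>R A + v *\<^sub>R B) *v x)"
    by (simp add: mv_comb inner_add_right)
qed

lemma GN_comb:
  assumes "A \<in> GN" "B \<in> GN" "0 \<le> u" "0 \<le> v" "u + v = 1"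
  shows "u *\<^sub>R (A::real^'n^'n) + v *\<^sub>R B \<in> GN"
  using assms psd_comb[of A B u v] by (auto simp: GN_def)

lemma FS_face_aux:
  fixes a b :: "real^'n^'n"
  assumes S: "subspace S" and ab: "a \<in> GN" "b \<in> GN" and u: "0 < u" "u < 1"
    and x: "(1 - u) *\<^sub>R a + u *\<^sub>R b \<in> face_of_subspace S"
  shows "a \<in> face_of_subspace S"
proof -
  define X where "X = (1 - u) *\<^sub>R a + u *\<^sub>R b"
  have XS: "X *v z \<in> S" for z using x unfolding X_def face_of_subspace_def by auto
  have psda: "psd a" and psdb: "psd b" using ab by (auto simp: GN_def)
  have ay: "a *v y = 0" if y: "y \<in> orthogonal_comp S" for y
  proof -
    have "(X *v y) \<bullet> y = 0" using y XS[of y] by (auto simp: orthogonal_comp_def orthogonal_def)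
    then have "(1 - u) * (y \<bullet> (a *v y)) + u * (y \<bullet> (b *v y)) = 0"
      by (simp add: X_def mv_comb inner_add_left inner_add_right inner_commute)
    moreover have "0 \<le> y \<bullet> (a *v y)" "0 \<le> y \<bullet> (b *v y)" using psda psdb psd_nonneg by auto
    ultimately have "(1 - u) * (y \<bullet> (a *v y)) = 0" using u
      by (smt (verit) mult_nonneg_nonneg)
    then have "y \<bullet> (a *v y) = 0" using u by simp
    then show ?thesis by (rule psd_zero[OF psda])
  qed
  have "a *v z \<in> S" for z
  proof -
    have "a *v z \<in> orthogonal_comp (orthogonal_comp S)"
      unfolding orthogonal_comp_def orthogonal_def
    proof (intro CollectI ballI)
      fix y assume "y \<in> {x. \<forall>y\<in>S. y \<bullet> x = 0}"
      then have "y \<in> orthogonal_comp S" by (simp add: orthogonal_comp_def orthogonal_def)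
      then have "a *v y = 0" by (rule ay)
      then show "y \<bullet> (a *v z) = 0" using inner_mv_sym[OF psd_sym[OF psda], of y z] by simp
    qed
    then show ?thesis using orthogonal_comp_self[OF S] by simp
  qed
  then show ?thesis using ab(1) by (auto simp: face_of_subspace_def)
qed

lemma FS_face:
  assumes S: "subspace S"
  shows "face_of_subspace S face_of (GN :: (real^'n^'n) set)"
  unfolding face_of_def
proof (intro conjI ballI impI)
  show "face_of_subspace S \<subseteq> GN" by (auto simp: face_of_subspace_def)
  show "convex (face_of_subspace S)"
    unfolding convex_def
  proof (intro ballI allI impI)
    fix A B :: "real^'n^'n" and u v :: real
    assume A: "A \<in> face_of_subspace S" and B: "B \<in> face_of_subspace S" and uv: "0 \<le> u" "0 \<le> v" "u + v = 1"
    have "u *\<^sub>R A + v *\<^sub>R B \<in> GN" using A B uv by (intro GN_comb) (auto simp: face_of_subspace_def)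
    moreover have "(u *\<^sub>R A + v *\<^sub>R B) *v z \<in> S" for z
    proof -
      have "A *v z \<in> S" "B *v z \<in> S" using A B by (auto simp: face_of_subspace_def)
      then show ?thesis by (simp add: mv_comb S subspace_add subspace_scale)
    qed
    ultimately show "u *\<^sub>R A + v *\<^sub>R B \<in> face_of_subspace S" by (auto simp: face_of_subspace_def)
  qed
  fix a b x assume ab: "a \<in> GN" "b \<in> GN" and x: "x \<in> face_of_subspace S" and seg: "x \<in> open_segment a b"
  then obtain u where u: "0 < u" "u < 1" and xe: "x = (1 - u) *\<^sub>R a + u *\<^sub>R b"
    by (auto simp: in_segment)
  show "a \<in> face_of_subspace S" using FS_face_aux[OF S ab u] x xe by simp
  have "x = (1 - (1 - u)) *\<^sub>R b + (1 - u) *\<^sub>R a" using xe by simp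
  then show "b \<in> face_of_subspace S" using FS_face_aux[OF S ab(2,1), of "1 - u"] x u by simp
qed


lemma outer_sum_mv: "(\<Sum>j<(K::nat). outer (v j)) *v x = (\<Sum>j<K. (v j \<bullet> x) *\<^sub>R v j)"
  by (simp add: sum_mv outer_mv)

lemma dominate:
  fixes G G0 :: "real^'n^'n"
  assumes p0: "psd G0" and p: "psd G" and r: "range ((*v) G) \<subseteq> range ((*v) G0)"
  shows "\<exists>c>0. \<forall>x. x \<bullet> (G *v x) \<le> c * (x \<bullet> (G0 *v x))"
proof -
  obtain K :: nat and w where wR: "\<forall>j<K. w j \<in> range ((*v) G)" and Gw: "G = (\<Sum>j<K. outer (w j))"
    using psd_factor[OF p] by blast
  define z where "z j = (SOME z. w j = G0 *v z)" for j
  have wz: "w j = G0 *v z j" if "j < K" for j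
  proof -
    have "\<exists>z. w j = G0 *v z" using wR r that by blast
    then show ?thesis unfolding z_def by (rule someI_ex)
  qed
  define c where "c = 1 + (\<Sum>j<K. z j \<bullet> (G0 *v z j))"
  have cpos: "c > 0" unfolding c_def using psd_nonneg[OF p0] by (smt (verit) sum_nonneg)
  have "\<forall>x. x \<bullet> (G *v x) \<le> c * (x \<bullet> (G0 *v x))"
  proof
    fix x
    define q where "q = x \<bullet> (G0 *v x)"
    have q0: "0 \<le> q" unfolding q_def using psd_nonneg[OF p0] .
    have "x \<bullet> (G *v x) = (\<Sum>j<K. (w j \<bullet> x)^2)"
      by (simp add: Gw outer_sum_mv inner_sum_right power2_eq_square inner_commute)
    also have "\<dots> \<le> (\<Sum>j<K. (z j \<bullet> (G0 *v z j)) * q)"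
    proof (rule sum_mono)
      fix j assume "j \<in> {..<K}"
      then have "w j \<bullet> x = z j \<bullet> (G0 *v x)" using wz inner_mv_sym[OF psd_sym[OF p0], of "z j" x] by simp
      then show "(w j \<bullet> x)^2 \<le> (z j \<bullet> (G0 *v z j)) * q"
        using psd_CS[OF p0, of "z j" x] by (simp add: q_def)
    qed
    also have "\<dots> = (c - 1) * q" by (simp add: c_def sum_distrib_right)
    also have "\<dots> \<le> c * q" using q0 by (simp add: algebra_simps)
    finally show "x \<bullet> (G *v x) \<le> c * (x \<bullet> (G0 *v x))" by (simp add: q_def)
  qed
  then show ?thesis using cpos by blast
qed

lemma face_gen:
  fixes G0 :: "real^'n^'n"
  assumes G0: "G0 \<in> GN"
  shows "face_generated GN G0 = face_of_subspace (range ((*v) G0))"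
proof
  define S where "S = range ((*v) G0)"
  have subS: "subspace S" unfolding S_def by (rule range_subspace)
  have G0F: "G0 \<in> face_of_subspace S" using G0 by (auto simp: face_of_subspace_def S_def)
  show "face_generated GN G0 \<subseteq> face_of_subspace (range ((*v) G0))"
    unfolding face_generated_def S_def[symmetric] using FS_face[OF subS] G0F by blast
  show "face_of_subspace (range ((*v) G0)) \<subseteq> face_generated GN G0"
    unfolding face_generated_def S_def[symmetric]
  proof (intro subsetI InterI, clarify)
    fix G F assume GF: "G \<in> face_of_subspace S" and F: "F face_of GN" and G0F': "G0 \<in> F"
    show "G \<in> F"
    proof (cases "G = G0")
      case True then show ?thesis using G0F' by simp
    next
      case False
      have GGN: "G \<in> GN" and rG: "range ((*v) G) \<subseteq> S" using GF by (auto simp: face_of_subspace_def)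
      have p0: "psd G0" and p: "psd G" using G0 GGN by (auto simp: GN_def)
      obtain c where c: "c > 0" "\<And>x. x \<bullet> (G *v x) \<le> c * (x \<bullet> (G0 *v x))"
        using dominate[OF p0 p rG[unfolded S_def]] by blast
      define e where "e = 1 / c"
      have e: "e > 0" using c by (simp add: e_def)
      define H where "H = (1 + e) *\<^sub>R G0 - e *\<^sub>R G"
      have Hx: "H *v x = (1 + e) *\<^sub>R (G0 *v x) - e *\<^sub>R (G *v x)" for x
        by (simp add: H_def matrix_vector_mult_diff_rdistrib scaleR_matrix_vector_assoc)
      have HGN: "H \<in> GN"
        unfolding GN_def psd_def
      proof (intro CollectI conjI allI)
        show "sym_mat H"
          using sym_entry[OF psd_sym[OF p0]] sym_entry[OF psd_sym[OF p]]
          unfolding sym_mat_def by (simp add: vec_eq_iff transpose_def H_def)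
        fix x
        have "e * (x \<bullet> (G *v x)) \<le> e * (c * (x \<bullet> (G0 *v x)))" using c(2) e by (intro mult_left_mono) auto
        also have "\<dots> = x \<bullet> (G0 *v x)" using c by (simp add: e_def)
        finally have "e * (x \<bullet> (G *v x)) \<le> x \<bullet> (G0 *v x)" .
        moreover have "0 \<le> x \<bullet> (G0 *v x)" using psd_nonneg[OF p0] .
        moreover have "0 \<le> e * (x \<bullet> (G0 *v x))" using e psd_nonneg[OF p0] by simp
        moreover have "(1 + e) * (x \<bullet> (G0 *v x)) = x \<bullet> (G0 *v x) + e * (x \<bullet> (G0 *v x))"
          by (simp add: algebra_simps)
        ultimately have "0 \<le> (1 + e) * (x \<bullet> (G0 *v x)) - e * (x \<bullet> (G *v x))"
          by linarith
        then show "0 \<le> x \<bullet> (H *v x)" by (simp add: Hx inner_diff_right)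
      next
        fix i show "H $ i $ i = 1" using G0 GGN by (simp add: H_def GN_def)
      qed
      define u where "u = c / (c + 1)"
      have u: "0 < u" "u < 1" using c by (auto simp: u_def)
      have eq: "G0 = (1 - u) *\<^sub>R G + u *\<^sub>R H"
      proof -
        have cc: "c + c * c \<noteq> 0" using c by (smt (verit) mult_pos_pos)
        show ?thesis using c cc by (simp add: vec_eq_iff H_def u_def e_def field_simps)
      qed
      have GH: "G \<noteq> H"
      proof
        assume "G = H"
        then have "G0 = G" using eq by (simp add: algebra_simps)
        then show False using False by simp
      qed
      have "G0 \<in> open_segment G H" unfolding in_segment using GH u eq by blast
      then show "G \<in> F" using face_ofD[OF F _ GGN HGN G0F'] by blast
    qed
  qed
qed

lemma ce_range:
  fixes G0 :: "real^'n^'n"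
  assumes G0: "G0 \<in> GN"
  shows "completely_elliptic (range ((*v) G0))"
proof -
  define S where "S = range ((*v) G0)"
  have subS: "subspace S" unfolding S_def by (rule range_subspace)
  have p0: "psd G0" and d: "\<And>i. G0 $ i $ i = 1" using G0 by (auto simp: GN_def)
  obtain K :: nat and v where K: "K \<le> dim S" and vS: "\<forall>j<K. v j \<in> S" and Gv: "G0 = (\<Sum>j<K. outer (v j))"
    using psd_factor[OF p0] unfolding S_def by blast
  define w where "w j = (if j < K then v j else 0)" for j
  have wS: "\<forall>j<dim S. w j \<in> S" using vS subspace_0[OF subS] by (simp add: w_def)
  have norm: "(\<Sum>j<dim S. (w j $ \<mu>)\<^sup>2) = 1" for \<mu>
  proof -
    have "(\<Sum>j<dim S. (w j $ \<mu>)\<^sup>2) = (\<Sum>j<K. (v j $ \<mu>)\<^sup>2)"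
      by (rule sum.mono_neutral_cong_right) (use K in \<open>auto simp: w_def\<close>)
    also have "\<dots> = G0 $ \<mu> $ \<mu>" by (simp add: Gv sum_component outer_def power2_eq_square)
    finally show ?thesis using d by simp
  qed
  have span: "span (w ` {..<dim S}) = S"
  proof
    show "span (w ` {..<dim S}) \<subseteq> S" using wS subS by (intro span_minimal) auto
    show "S \<subseteq> span (w ` {..<dim S})"
    proof
      fix y assume "y \<in> S"
      then obtain z where y: "y = G0 *v z" unfolding S_def by auto
      have "y = (\<Sum>j<K. (v j \<bullet> z) *\<^sub>R v j)" using y Gv outer_sum_mv by simp
      also have "\<dots> \<in> span (w ` {..<dim S})"
      proof (rule span_sum)
        fix j assume j: "j \<in> {..<K}"
        then have "v j = w j" "j < dim S" using K by (auto simp: w_def)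
        then show "(v j \<bullet> z) *\<^sub>R v j \<in> span (w ` {..<dim S})"
          by (intro span_mul span_base) auto
      qed
      finally show "y \<in> span (w ` {..<dim S})" .
    qed
  qed
  show ?thesis unfolding completely_elliptic_def S_def[symmetric]
    using subS wS norm span by (intro conjI exI[of _ w]) (auto simp: dim_span)
qed


lemma trace_scaleR: "trace (c *\<^sub>R (M::real^'n^'n)) = c * trace M"
  by (simp add: trace_def sum_distrib_left)

lemma tr_comb_left: "trace ((u *\<^sub>R (A::real^'n^'n) + v *\<^sub>R B) ** X) = u * trace (A ** X) + v * trace (B ** X)"
  by (simp add: trace_mm sum.distrib sum_distrib_left distrib_right mult.assoc)

lemma tr_comb_right: "trace ((A::real^'n^'n) ** (u *\<^sub>R X + v *\<^sub>R Y)) = u * trace (A ** X) + v * trace (A ** Y)"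
  by (simp add: trace_mm sum.distrib sum_distrib_left distrib_left mult_ac)

lemma tr_diff_right: "trace ((A::real^'n^'n) ** (X - Y)) = trace (A ** X) - trace (A ** Y)"
  by (simp add: trace_mm sum_subtractf right_diff_distrib)

lemma tr_add_right: "trace ((A::real^'n^'n) ** (X + Y)) = trace (A ** X) + trace (A ** Y)"
  by (simp add: trace_mm sum.distrib distrib_left)



lemma tr_scale_right: "trace ((A::real^'n^'n) ** (c *\<^sub>R X)) = c * trace (A ** X)"
  by (simp add: trace_mm sum_distrib_left mult_ac)

lemma LN_add: "X \<in> LN \<Longrightarrow> Y \<in> LN \<Longrightarrow> X + Y \<in> LN"
  by (simp add: LN_def sym_mat_def zero_diag_def transpose_def vec_eq_iff)

lemma LN_scale: "X \<in> LN \<Longrightarrow> c *\<^sub>R X \<in> LN"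
  by (simp add: LN_def sym_mat_def zero_diag_def transpose_def vec_eq_iff)

lemma LN_zero: "0 \<in> LN"
  by (simp add: LN_def sym_mat_def zero_diag_def transpose_def vec_eq_iff)

lemma transpose_diff: "transpose ((A::real^'n^'n) - B) = transpose A - transpose B"
  by (simp add: transpose_def vec_eq_iff)

lemma LN_diff:
  assumes "X \<in> GN" "Y \<in> GN"
  shows "X - Y \<in> LN"
proof -
  have "sym_mat X" "sym_mat Y" using assms by (auto simp: GN_def psd_def)
  then have "sym_mat (X - Y)" unfolding sym_mat_def by (simp add: transpose_diff)
  moreover have "zero_diag (X - Y)" using assms by (simp add: GN_def zero_diag_def)
  ultimately show ?thesis by (simp add: LN_def)
qed

lemma LN_sum: "finite I \<Longrightarrow> (\<forall>i\<in>I. M i \<in> LN) \<Longrightarrow> (\<Sum>i\<in>I. M i) \<in> LN"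
  by (induction I rule: finite_induct) (auto intro: LN_add LN_zero)

lemma lf_zero: "l \<in> lin_functionals \<Longrightarrow> l 0 = 0"
proof -
  assume "l \<in> lin_functionals"
  then have "l ((0::real) *\<^sub>R 0) = 0 * l 0" using LN_zero unfolding lin_functionals_def by blast
  then show ?thesis by simp
qed

lemma lf_sum:
  assumes lf: "l \<in> lin_functionals"
  shows "finite I \<Longrightarrow> (\<forall>i\<in>I. M i \<in> LN) \<Longrightarrow> l (\<Sum>i\<in>I. M i) = (\<Sum>i\<in>I. l (M i))"
proof (induction I rule: finite_induct)
  case empty then show ?case by (simp add: lf_zero[OF lf])
next
  case (insert x F)
  have "M x \<in> LN" "(\<Sum>i\<in>F. M i) \<in> LN" using insert by (auto intro: LN_sum)
  moreover have "\<forall>X\<in>LN. \<forall>Y\<in>LN. l (X + Y) = l X + l Y" using lf unfolding lin_functionals_def by blast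
  ultimately have "l (M x + (\<Sum>i\<in>F. M i)) = l (M x) + l (\<Sum>i\<in>F. M i)" by blast
  then show ?case using insert by simp
qed

lemma lf_scale: "l \<in> lin_functionals \<Longrightarrow> X \<in> LN \<Longrightarrow> l (c *\<^sub>R X) = c * l X"
  unfolding lin_functionals_def by blast

definition Emat :: "'n \<Rightarrow> 'n \<Rightarrow> real^'n^'n" where
  "Emat a b = (\<chi> p q. if p \<noteq> q \<and> ((p = a \<and> q = b) \<or> (p = b \<and> q = a)) then 1 else 0)"

lemma Emat_LN: "Emat a b \<in> LN"
  by (auto simp: LN_def sym_mat_def zero_diag_def transpose_def vec_eq_iff Emat_def)

lemma Emat_sym: "Emat a b = Emat b a"
  by (auto simp: vec_eq_iff Emat_def)

lemma Emat_diag: "Emat a a = 0"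
  by (auto simp: vec_eq_iff Emat_def)

lemma Emat_split: "a \<noteq> b \<Longrightarrow> Emat a b $ p $ q = (if p = a \<and> q = b then 1 else 0) + (if p = b \<and> q = a then 1 else 0)"
  by (auto simp: Emat_def)

lemma tr_Emat:
  assumes "a \<noteq> b"
  shows "trace ((A::real^'n^'n) ** Emat a b) = A $ b $ a + A $ a $ b"
proof -
  have e: "A $ i $ k * Emat a b $ k $ i =
      (if k = a then (if i = b then A $ i $ k else 0) else 0) +
      (if k = b then (if i = a then A $ i $ k else 0) else 0)" for i k
    using assms by (simp add: Emat_split)
  have "trace (A ** Emat a b) = (\<Sum>i\<in>UNIV. \<Sum>k\<in>UNIV.
      (if k = a then (if i = b then A $ i $ k else 0) else 0) +
      (if k = b then (if i = a then A $ i $ k else 0) else 0))"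
    unfolding trace_mm e ..
  also have "\<dots> = (\<Sum>i\<in>UNIV. (if i = b then A $ i $ a else 0) + (if i = a then A $ i $ b else 0))"
    by (simp add: sum.distrib)
  also have "\<dots> = A $ b $ a + A $ a $ b"
    by (simp add: sum.distrib)
  finally show ?thesis .
qed

lemma kill_G0:
  fixes A G0 :: "real^'n^'n"
  assumes "sym_mat A" "range ((*v) A) \<subseteq> orthogonal_comp (range ((*v) G0))"
  shows "A ** G0 = 0"
  unfolding matrix_eq
proof
  fix x
  have "A *v (G0 *v x) = 0" by (rule kill_S[OF assms]) auto
  then show "(A ** G0) *v x = 0 *v x" by (simp add: matrix_vector_mul_assoc)
qed

lemma inj_part:
  fixes A B G0 :: "real^'n^'n"
  assumes G0: "G0 \<in> GN" and A: "psd A" "range ((*v) A) \<subseteq> orthogonal_comp (range ((*v) G0))"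
    and B: "psd B" "range ((*v) B) \<subseteq> orthogonal_comp (range ((*v) G0))"
    and eq: "tr_functional A = tr_functional B"
  shows "A = B"
proof -
  have off: "A $ a $ b = B $ a $ b" if ab: "a \<noteq> b" for a b
  proof -
    have "trace (A ** Emat a b) = trace (B ** Emat a b)"
      using fun_cong[OF eq, of "Emat a b"] Emat_LN[of a b] unfolding tr_functional_def by presburger
    then show ?thesis using ab sym_entry[OF psd_sym[OF A(1)], of a b] sym_entry[OF psd_sym[OF B(1)], of a b]
      by (simp add: tr_Emat)
  qed
  have AG: "A ** G0 = 0" by (rule kill_G0[OF psd_sym[OF A(1)] A(2)])
  have BG: "B ** G0 = 0" by (rule kill_G0[OF psd_sym[OF B(1)] B(2)])
  have dg: "A $ a $ a = B $ a $ a" for a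
  proof -
    have "(\<Sum>k\<in>UNIV. A $ a $ k * G0 $ k $ a) - (\<Sum>k\<in>UNIV. B $ a $ k * G0 $ k $ a) = 0"
      using AG BG by (simp add: vec_eq_iff matrix_matrix_mult_def)
    then have "(\<Sum>k\<in>UNIV. (A $ a $ k - B $ a $ k) * G0 $ k $ a) = 0"
      by (simp add: sum_subtractf left_diff_distrib)
    also have "(\<Sum>k\<in>UNIV. (A $ a $ k - B $ a $ k) * G0 $ k $ a) =
        (\<Sum>k\<in>UNIV. if k = a then (A $ a $ a - B $ a $ a) * G0 $ a $ a else 0)"
      by (intro sum.cong refl) (auto simp: off)
    finally show ?thesis using G0 by (simp add: GN_def)
  qed
  show ?thesis using off dg by (metis vec_eq_iff)
qed

lemma into_part:
  fixes A G0 :: "real^'n^'n"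
  assumes G0: "G0 \<in> GN" and A: "psd A" "range ((*v) A) \<subseteq> orthogonal_comp (range ((*v) G0))"
  shows "tr_functional A \<in> cone_C G0"
proof -
  have AG: "A ** G0 = 0" by (rule kill_G0[OF psd_sym[OF A(1)] A(2)])
  have lin: "tr_functional A \<in> lin_functionals"
    unfolding lin_functionals_def tr_functional_def
    by (auto simp: LN_add LN_scale tr_add_right tr_scale_right)
  have "0 \<le> tr_functional A (G - G0)" if "G \<in> GN" for G
  proof -
    have "tr_functional A (G - G0) = trace (A ** G) - trace (A ** G0)"
      using LN_diff[OF that G0] by (simp add: tr_functional_def tr_diff_right)
    also have "\<dots> = trace (A ** G)" using AG by (simp add: trace_zero_mat)
    also have "\<dots> \<ge> 0" using that A(1) by (intro tr_psd) (auto simp: GN_def)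
    finally show ?thesis .
  qed
  then show ?thesis using lin by (simp add: cone_C_def)
qed

lemma affine_part:
  "tr_functional ((1 - t) *\<^sub>R A + t *\<^sub>R B) = (\<lambda>X. (1 - t) * tr_functional A X + t * tr_functional B X)"
  by (rule ext) (simp add: tr_functional_def tr_comb_left)



lemma diagm_mv: "diagm d *v x = (\<chi> i. d $ i * x $ i)"
  by (simp add: vec_eq_iff matrix_vector_mult_def diagm_def if_mult_left)

lemma psd_diagm:
  assumes "\<forall>i. 0 \<le> d $ i"
  shows "psd (diagm d)"
  unfolding psd_def
proof (intro conjI allI)
  show "sym_mat (diagm d)" by (auto simp: sym_mat_def transpose_def vec_eq_iff diagm_def)
  fix x
  have "x \<bullet> (diagm d *v x) = (\<Sum>i\<in>UNIV. d $ i * (x $ i * x $ i))"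
    by (simp add: diagm_mv inner_vec_def mult_ac)
  also have "\<dots> \<ge> 0" using assms by (intro sum_nonneg) simp
  finally show "0 \<le> x \<bullet> (diagm d *v x)" .
qed

lemma psd_outer: "psd (outer x)"
  unfolding psd_def
proof (intro conjI allI)
  show "sym_mat (outer x)" by (simp add: sym_mat_def transpose_def vec_eq_iff outer_def mult.commute)
  fix y
  have "y \<bullet> (outer x *v y) = (x \<bullet> y) * (x \<bullet> y)" by (simp add: outer_mv inner_commute)
  then show "0 \<le> y \<bullet> (outer x *v y)" by simp
qed

lemma psd_scale: "psd A \<Longrightarrow> 0 \<le> r \<Longrightarrow> psd (r *\<^sub>R (A::real^'n^'n))"
  using psd_comb[of A A r 0] by simp

lemma psd_zero_mat: "psd (0::real^'n^'n)"
  by (simp add: psd_def sym_mat_def transpose_def vec_eq_iff)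

lemma Emat_entry: "p \<noteq> q \<Longrightarrow> Emat a b $ p $ q = (if a = p \<and> b = q then 1 else 0) + (if a = q \<and> b = p then 1 else 0)"
  unfolding Emat_def by (cases "a = p"; cases "b = q"; cases "a = q"; cases "b = p") simp_all

lemma Emat_entry_diag: "Emat a b $ p $ p = 0"
  by (simp add: Emat_def)

lemma LN_decomp:
  assumes X: "X \<in> LN"
  shows "X = (\<Sum>a\<in>UNIV. \<Sum>b\<in>UNIV. (X $ a $ b / 2) *\<^sub>R Emat a b)"
proof -
  have Xs: "X $ a $ b = X $ b $ a" for a b using X sym_entry unfolding LN_def by blast
  have Xd: "X $ a $ a = 0" for a using X by (auto simp: LN_def zero_diag_def)
  have eq: "X $ p $ q = (\<Sum>a\<in>UNIV. \<Sum>b\<in>UNIV. X $ a $ b / 2 * Emat a b $ p $ q)" for p q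
  proof (cases "p = q")
    case True then show ?thesis by (simp add: Emat_entry_diag Xd)
  next
    case False
    have "(\<Sum>a\<in>UNIV. \<Sum>b\<in>UNIV. X $ a $ b / 2 * Emat a b $ p $ q) =
          (\<Sum>a\<in>UNIV. \<Sum>b\<in>UNIV. (if b = q then (if a = p then X $ a $ b / 2 else 0) else 0)
                + (if b = p then (if a = q then X $ a $ b / 2 else 0) else 0))"
      using False by (intro sum.cong refl) (simp add: Emat_entry distrib_left)
    also have "\<dots> = X $ p $ q / 2 + X $ q $ p / 2" by (simp add: sum.distrib)
    also have "\<dots> = X $ p $ q" using Xs[of p q] by simp
    finally show ?thesis by simp
  qed
  show ?thesis
    apply (simp only: vec_eq_iff sum_component vector_scaleR_component real_scaleR_def)
    apply (intro allI)
    apply (rule eq)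
    done
qed

lemma lf_trace:
  assumes lf: "l \<in> lin_functionals" and X: "X \<in> LN"
  shows "l X = trace ((\<chi> a b. l (Emat a b) / 2) ** X)"
proof -
  have Xs: "X $ a $ b = X $ b $ a" for a b using X sym_entry unfolding LN_def by blast
  have inLN: "(\<Sum>b\<in>UNIV. (X $ a $ b / 2) *\<^sub>R Emat a b) \<in> LN" for a
    by (intro LN_sum) (auto intro: LN_scale Emat_LN)
  have "l X = l (\<Sum>a\<in>UNIV. \<Sum>b\<in>UNIV. (X $ a $ b / 2) *\<^sub>R Emat a b)"
    by (rule arg_cong[where f=l, OF LN_decomp[OF X]])
  also have "\<dots> = (\<Sum>a\<in>UNIV. l (\<Sum>b\<in>UNIV. (X $ a $ b / 2) *\<^sub>R Emat a b))"
    using inLN by (intro lf_sum[OF lf]) auto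
  also have "\<dots> = (\<Sum>a\<in>UNIV. \<Sum>b\<in>UNIV. l ((X $ a $ b / 2) *\<^sub>R Emat a b))"
    by (intro sum.cong refl lf_sum[OF lf]) (auto intro: LN_scale Emat_LN)
  also have "\<dots> = (\<Sum>a\<in>UNIV. \<Sum>b\<in>UNIV. X $ a $ b / 2 * l (Emat a b))"
    by (intro sum.cong refl lf_scale[OF lf] Emat_LN)
  also have "\<dots> = trace ((\<chi> a b. l (Emat a b) / 2) ** X)"
    unfolding trace_mm
    apply (intro sum.cong refl)
    subgoal for a b using Xs[of b a] by simp
    done
  finally show ?thesis .
qed


lemma nonneg_limit: "(\<And>s::real. 0 < s \<Longrightarrow> 0 \<le> x + s) \<Longrightarrow> 0 \<le> (x::real)"
proof (rule ccontr)
  assume h: "\<And>s::real. 0 < s \<Longrightarrow> 0 \<le> x + s" and "\<not> 0 \<le> x"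
  then have "0 \<le> x + (- x / 2)" by (intro h) simp
  then show False using \<open>\<not> 0 \<le> x\<close> by simp
qed

lemma surj_part:
  fixes G0 :: "real^'n^'n" and l
  assumes G0: "G0 \<in> GN" and lC: "l \<in> cone_C G0"
  shows "\<exists>A. psd A \<and> range ((*v) A) \<subseteq> orthogonal_comp (range ((*v) G0)) \<and> tr_functional A = l"
proof -
  have lf: "l \<in> lin_functionals" and lpos: "\<forall>G\<in>GN. 0 \<le> l (G - G0)" using lC by (auto simp: cone_C_def)
  define J :: "real^'n^'n" where "J = (\<chi> a b. l (Emat a b) / 2)"
  have lJ: "l X = trace (J ** X)" if "X \<in> LN" for X unfolding J_def by (rule lf_trace[OF lf that])
  have Jsym: "sym_mat J"
    unfolding sym_mat_def J_def transpose_def vec_eq_iff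
    by (simp, metis Emat_sym)
  have d0: "\<And>i. G0 $ i $ i = 1" and p0: "psd G0" using G0 by (auto simp: GN_def)
  define t0 where "t0 = trace (J ** G0)"
  define D :: "((real^'n) \<times> real) set" where
    "D = {((\<chi> i. G $ i $ i - 1), trace (J ** G) - t0 + s) | G s. psd G \<and> 0 < s}"
  have convD: "convex D"
    unfolding convex_def
  proof (intro ballI allI impI)
    fix x y :: "(real^'n) \<times> real" and u v :: real
    assume x: "x \<in> D" and y: "y \<in> D" and uv: "0 \<le> u" "0 \<le> v" "u + v = 1"
    obtain G1 s1 where x': "x = ((\<chi> i. G1 $ i $ i - 1), trace (J ** G1) - t0 + s1)" "psd G1" "0 < s1"
      using x unfolding D_def by blast
    obtain G2 s2 where y': "y = ((\<chi> i. G2 $ i $ i - 1), trace (J ** G2) - t0 + s2)" "psd G2" "0 < s2"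
      using y unfolding D_def by blast
    define G where "G = u *\<^sub>R G1 + v *\<^sub>R G2"
    define s where "s = u * s1 + v * s2"
    have pG: "psd G" unfolding G_def using x'(2) y'(2) uv by (intro psd_comb) auto
    have sp: "0 < s"
    proof (cases "u = 0")
      case True then show ?thesis using uv y'(3) by (simp add: s_def)
    next
      case False then have "0 < u * s1" using uv x'(3) by simp
      moreover have "0 \<le> v * s2" using uv y'(3) by simp
      ultimately show ?thesis by (simp add: s_def)
    qed
    have e1: "u *\<^sub>R (\<chi> i. G1 $ i $ i - 1) + v *\<^sub>R (\<chi> i. G2 $ i $ i - 1) = (\<chi> i. G $ i $ i - 1)"
    proof -
      have "u * (G1 $ i $ i - 1) + v * (G2 $ i $ i - 1) = u * G1 $ i $ i + v * G2 $ i $ i - 1" for i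
        using uv(3) by (simp add: algebra_simps)
      then show ?thesis by (simp add: vec_eq_iff G_def)
    qed
    have e2: "u * (trace (J ** G1) - t0 + s1) + v * (trace (J ** G2) - t0 + s2) = trace (J ** G) - t0 + s"
    proof -
      have "trace (J ** G) = u * trace (J ** G1) + v * trace (J ** G2)" unfolding G_def by (rule tr_comb_right)
      moreover have "t0 * u + t0 * v = t0" using uv(3) by (simp add: distrib_left[symmetric])
      ultimately show ?thesis unfolding s_def by (simp add: algebra_simps)
    qed
    have "u *\<^sub>R x + v *\<^sub>R y = ((\<chi> i. G $ i $ i - 1), trace (J ** G) - t0 + s)"
      using e1 e2 by (simp add: x'(1) y'(1))
    then show "u *\<^sub>R x + v *\<^sub>R y \<in> D" unfolding D_def using pG sp by blast
  qed
  have notin: "0 \<notin> D"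
  proof
    assume "0 \<in> D"
    then obtain G s where e: "0 = ((\<chi> i. G $ i $ i - 1), trace (J ** G) - t0 + s)" and pG: "psd G" and sp: "0 < s"
      unfolding D_def by blast
    have "\<forall>i. G $ i $ i = 1"
    proof
      fix i
      have "(0::real^'n) $ i = (\<chi> i. G $ i $ i - 1) $ i" using e by (simp add: zero_prod_def)
      then show "G $ i $ i = 1" by simp
    qed
    then have GG: "G \<in> GN" using pG by (simp add: GN_def)
    have tr: "trace (J ** G) - t0 + s = 0" using e by (simp add: zero_prod_def)
    have "l (G - G0) = trace (J ** (G - G0))" using LN_diff[OF GG G0] by (rule lJ)
    also have "\<dots> = trace (J ** G) - t0" by (simp add: tr_diff_right t0_def)
    finally have "l (G - G0) < 0" using tr sp by simp
    then show False using lpos GG by force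
  qed
  obtain a where a0: "a \<noteq> 0" and aD: "\<forall>x\<in>D. 0 \<le> a \<bullet> x"
    using separating_hyperplane_set_0[OF convD notin] by blast
  obtain lam mu where a: "a = (lam, mu)" by (cases a)
  have key: "0 \<le> (\<Sum>i\<in>UNIV. lam $ i * (G $ i $ i - 1)) + mu * (trace (J ** G) - t0 + s)"
    if "psd G" "0 < s" for G s
  proof -
    have "((\<chi> i. G $ i $ i - 1), trace (J ** G) - t0 + s) \<in> D" unfolding D_def using that by blast
    then have "0 \<le> a \<bullet> ((\<chi> i. G $ i $ i - 1), trace (J ** G) - t0 + s)" using aD by blast
    then show ?thesis by (simp add: a inner_Pair inner_vec_def)
  qed
  have mu0: "0 \<le> mu"
  proof (rule ccontr)
    assume "\<not> 0 \<le> mu"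
    define c0 where "c0 = (\<Sum>i\<in>UNIV. lam $ i * ((0::real^'n^'n) $ i $ i - 1)) + mu * (trace (J ** (0::real^'n^'n)) - t0)"
    define s where "s = (\<bar>c0\<bar> + 1) / (- mu)"
    have sp: "0 < s" unfolding s_def using \<open>\<not> 0 \<le> mu\<close> by (intro divide_pos_pos) auto
    have "0 \<le> c0 + mu * s" using key[OF psd_zero_mat sp] unfolding c0_def by (simp add: algebra_simps)
    moreover have "mu * s = - (\<bar>c0\<bar> + 1)" using \<open>\<not> 0 \<le> mu\<close> by (simp add: s_def)
    ultimately show False by linarith
  qed
  have mune: "mu \<noteq> 0"
  proof
    assume m: "mu = 0"
    have "lam $ i = 0" for i
    proof -
      define d1 :: "real^'n" where "d1 = (\<chi> j. if j = i then 2 else 1)"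
      define d2 :: "real^'n" where "d2 = (\<chi> j. if j = i then 1/2 else 1)"
      have "psd (diagm d1)" "psd (diagm d2)" by (auto intro!: psd_diagm simp: d1_def d2_def)
      then have k1: "0 \<le> (\<Sum>j\<in>UNIV. lam $ j * (diagm d1 $ j $ j - 1))"
        and k2: "0 \<le> (\<Sum>j\<in>UNIV. lam $ j * (diagm d2 $ j $ j - 1))"
        using key[of _ 1] m by auto
      have "(\<Sum>j\<in>UNIV. lam $ j * (diagm d1 $ j $ j - 1)) = (\<Sum>j\<in>UNIV. if j = i then lam $ j else 0)"
        by (intro sum.cong refl) (simp add: diagm_def d1_def)
      also have "\<dots> = lam $ i" by simp
      finally have l1: "0 \<le> lam $ i" using k1 by simp
      have "(\<Sum>j\<in>UNIV. lam $ j * (diagm d2 $ j $ j - 1)) = (\<Sum>j\<in>UNIV. if j = i then - lam $ j / 2 else 0)"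
        by (intro sum.cong refl) (simp add: diagm_def d2_def)
      also have "\<dots> = - lam $ i / 2" by simp
      finally have "0 \<le> - lam $ i / 2" using k2 by simp
      then show ?thesis using l1 by simp
    qed
    then have "lam = 0" by (simp add: vec_eq_iff)
    then show False using a0 a m by (simp add: zero_prod_def)
  qed
  have mup: "0 < mu" using mu0 mune by simp
  define kap :: "real^'n" where "kap = (1 / mu) *\<^sub>R lam"
  define A where "A = J + diagm kap"
  have trA: "trace (A ** G) = trace (J ** G) + (\<Sum>i\<in>UNIV. kap $ i * G $ i $ i)" for G
    by (simp add: A_def tr_add_left tr_diagm)
  have trA0: "trace (A ** G0) = t0 + (\<Sum>i\<in>UNIV. kap $ i)" by (simp add: trA d0 t0_def)
  have ge: "trace (A ** G0) \<le> trace (A ** G)" if pG: "psd G" for G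
  proof -
    have hs: "0 \<le> trace (A ** G) - trace (A ** G0) + s" if sp: "0 < s" for s
    proof -
      define SG where "SG = (\<Sum>i\<in>UNIV. kap $ i * G $ i $ i)"
      define SK where "SK = (\<Sum>i\<in>UNIV. kap $ i)"
      define L where "L = (\<Sum>i\<in>UNIV. lam $ i * (G $ i $ i - 1))"
      have "mu * (\<Sum>i\<in>UNIV. kap $ i * (G $ i $ i - 1)) = L"
        using mup unfolding L_def by (simp add: kap_def sum_distrib_left)
      moreover have "(\<Sum>i\<in>UNIV. kap $ i * (G $ i $ i - 1)) = SG - SK"
        unfolding SG_def SK_def by (simp add: right_diff_distrib sum_subtractf)
      ultimately have h1: "mu * (SG - SK) = L" by simp
      have h2: "trace (A ** G) = trace (J ** G) + SG" unfolding SG_def by (rule trA)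
      have h3: "trace (A ** G0) = t0 + SK" unfolding SK_def by (rule trA0)
      have "mu * (trace (A ** G) - trace (A ** G0) + s) = L + mu * (trace (J ** G) - t0 + s)"
        unfolding h2 h3 h1[symmetric] by (simp add: algebra_simps)
      then have "mu * (trace (A ** G) - trace (A ** G0) + s) =
          (\<Sum>i\<in>UNIV. lam $ i * (G $ i $ i - 1)) + mu * (trace (J ** G) - t0 + s)"
        by (simp add: L_def)
      then have "0 \<le> mu * (trace (A ** G) - trace (A ** G0) + s)" using key[OF pG sp] by simp
      then show ?thesis using mup by (simp add: zero_le_mult_iff)
    qed
    have "0 \<le> trace (A ** G) - trace (A ** G0)" using nonneg_limit[of "trace (A ** G) - trace (A ** G0)"] hs by blast
    then show ?thesis by simp
  qed
  have c0: "trace (A ** G0) \<le> 0" using ge[OF psd_zero_mat] by (simp add: trace_zero_mat)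
  have Asym: "sym_mat A"
    using Jsym unfolding A_def sym_mat_def by (simp add: vec_eq_iff transpose_def diagm_def)
  have psdA: "psd A"
    unfolding psd_def
  proof (intro conjI allI Asym)
    fix x
    show "0 \<le> x \<bullet> (A *v x)"
    proof (rule ccontr)
      assume n: "\<not> 0 \<le> x \<bullet> (A *v x)"
      define r where "r = (1 - trace (A ** G0)) / (- (x \<bullet> (A *v x)))"
      have rp: "0 \<le> r" unfolding r_def using n c0 by (intro divide_nonneg_nonneg) auto
      have "trace (A ** G0) \<le> trace (A ** (r *\<^sub>R outer x))" by (rule ge[OF psd_scale[OF psd_outer rp]])
      also have "\<dots> = r * (x \<bullet> (A *v x))" by (simp add: tr_scale_right tr_outer)
      also have "\<dots> = trace (A ** G0) - 1" using n by (simp add: r_def)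
      finally show False by simp
    qed
  qed
  have "trace (A ** G0) = 0" using c0 tr_psd[OF psdA p0] by simp
  then have AG: "A ** G0 = 0" by (rule tr_psd_zero[OF psdA p0])
  have rng: "range ((*v) A) \<subseteq> orthogonal_comp (range ((*v) G0))"
  proof (clarsimp simp: orthogonal_comp_def orthogonal_def)
    fix w v
    have "(G0 *v v) \<bullet> (A *v w) = (A *v (G0 *v v)) \<bullet> w" by (rule inner_mv_sym[OF Asym])
    also have "\<dots> = 0" using AG by (simp add: matrix_vector_mul_assoc)
    finally show "(G0 *v v) \<bullet> (A *v w) = 0" .
  qed
  have trf: "tr_functional A = l"
  proof
    fix X
    show "tr_functional A X = l X"
    proof (cases "X \<in> LN")
      case True
      have "trace (A ** X) = trace (J ** X) + (\<Sum>i\<in>UNIV. kap $ i * X $ i $ i)" by (rule trA)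
      also have "\<dots> = trace (J ** X)" using True by (simp add: LN_def zero_diag_def)
      finally show ?thesis using True lJ[OF True] by (simp add: tr_functional_def)
    next
      case False
      then show ?thesis using lf by (simp add: tr_functional_def lin_functionals_def)
    qed
  qed
  show ?thesis using psdA rng trf by blast
qed



theorem theorem3:
  fixes J :: "real^'n^'n"
  assumes J_sym: "sym_mat J" and J_diag: "zero_diag J"
  shows
   "(\<forall>(s :: real^'m^'n) k. ground_state J s \<and> Jk J k ** s = 0 \<longrightarrow> Jk J k ** Gram s = 0)
    \<and>
    (\<forall>S A. completely_elliptic S \<and> closed (face_of_subspace S) \<and>
        face_of_subspace S face_of GN \<and>
        face_of_subspace S \<noteq> {} \<and> face_of_subspace S \<noteq> GN \<and>
        psd A \<and> range ((*v) A) = orthogonal_comp S \<longrightarrow>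
        (let J' = (\<chi> i j. if i = j then 0 else A $ i $ j); k = (\<chi> i. A $ i $ i) in
          A = Jk J' k \<and> sym_mat J' \<and> zero_diag J' \<and>
          (\<forall>s :: real^'m^'n. spin_config s \<and> Gram s \<in> face_of_subspace S \<longrightarrow>
              ground_state J' s \<and> Jk J' k ** s = 0)))
    \<and>
    (\<forall>G0 :: real^'n^'n. G0 \<in> GN \<and> rank G0 < CARD('n) \<longrightarrow>
       (\<exists>S. completely_elliptic S \<and>
            face_generated GN G0 = face_of_subspace S \<and>
            (let P = {A. psd A \<and> range ((*v) A) \<subseteq> orthogonal_comp S} in
              bij_betw tr_functional P (cone_C G0) \<and>
              (\<forall>A\<in>P. \<forall>B\<in>P. \<forall>t::real. 0 \<le> t \<and> t \<le> 1 \<longrightarrow>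
                 tr_functional ((1 - t) *\<^sub>R A + t *\<^sub>R B) =
                 (\<lambda>X. (1 - t) * tr_functional A X + t * tr_functional B X)))))"
proof (intro conjI)
  show "\<forall>(s :: real^'m^'n) k. ground_state J s \<and> Jk J k ** s = 0 \<longrightarrow> Jk J k ** Gram s = 0"
    using part1 by blast
  show "\<forall>S A. completely_elliptic S \<and> closed (face_of_subspace S) \<and>
        face_of_subspace S face_of GN \<and>
        face_of_subspace S \<noteq> {} \<and> face_of_subspace S \<noteq> GN \<and>
        psd A \<and> range ((*v) A) = orthogonal_comp S \<longrightarrow>
        (let J' = (\<chi> i j. if i = j then 0 else A $ i $ j); k = (\<chi> i. A $ i $ i) in
          A = Jk J' k \<and> sym_mat J' \<and> zero_diag J' \<and>
          (\<forall>s :: real^'m^'n. spin_config s \<and> Gram s \<in> face_of_subspace S \<longrightarrow>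
              ground_state J' s \<and> Jk J' k ** s = 0))"
  proof (intro allI impI)
    fix S :: "(real^'n) set" and A :: "real^'n^'n"
    assume h: "completely_elliptic S \<and> closed (face_of_subspace S) \<and>
        face_of_subspace S face_of GN \<and>
        face_of_subspace S \<noteq> {} \<and> face_of_subspace S \<noteq> GN \<and>
        psd A \<and> range ((*v) A) = orthogonal_comp S"
    then have "psd A" "range ((*v) A) \<subseteq> orthogonal_comp S" by auto
    from part2[OF this, where 'm='m] show "let J' = (\<chi> i j. if i = j then 0 else A $ i $ j); k = (\<chi> i. A $ i $ i) in
          A = Jk J' k \<and> sym_mat J' \<and> zero_diag J' \<and>
          (\<forall>s :: real^'m^'n. spin_config s \<and> Gram s \<in> face_of_subspace S \<longrightarrow>
              ground_state J' s \<and> Jk J' k ** s = 0)"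
      unfolding Let_def .
  qed
  show "\<forall>G0 :: real^'n^'n. G0 \<in> GN \<and> rank G0 < CARD('n) \<longrightarrow>
       (\<exists>S. completely_elliptic S \<and>
            face_generated GN G0 = face_of_subspace S \<and>
            (let P = {A. psd A \<and> range ((*v) A) \<subseteq> orthogonal_comp S} in
              bij_betw tr_functional P (cone_C G0) \<and>
              (\<forall>A\<in>P. \<forall>B\<in>P. \<forall>t::real. 0 \<le> t \<and> t \<le> 1 \<longrightarrow>
                 tr_functional ((1 - t) *\<^sub>R A + t *\<^sub>R B) =
                 (\<lambda>X. (1 - t) * tr_functional A X + t * tr_functional B X))))"
  proof (intro allI impI)
    fix G0 :: "real^'n^'n"
    assume "G0 \<in> GN \<and> rank G0 < CARD('n)"
    then have G0: "G0 \<in> GN" by simp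
    define S where "S = range ((*v) G0)"
    define P where "P = {A. psd A \<and> range ((*v) A) \<subseteq> orthogonal_comp S}"
    have bij: "bij_betw tr_functional P (cone_C G0)"
      unfolding bij_betw_def
    proof
      show "inj_on tr_functional P"
        unfolding inj_on_def P_def S_def using inj_part[OF G0] by blast
      show "tr_functional ` P = cone_C G0"
      proof
        show "tr_functional ` P \<subseteq> cone_C G0"
          unfolding P_def S_def using into_part[OF G0] by blast
        show "cone_C G0 \<subseteq> tr_functional ` P"
        proof
          fix l assume "l \<in> cone_C G0"
          then obtain A where "psd A" "range ((*v) A) \<subseteq> orthogonal_comp S" "tr_functional A = l"
            using surj_part[OF G0] unfolding S_def by blast
          then show "l \<in> tr_functional ` P" unfolding P_def by blast
        qed
      qed
    qed
    show "\<exists>S. completely_elliptic S \<and>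
            face_generated GN G0 = face_of_subspace S \<and>
            (let P = {A. psd A \<and> range ((*v) A) \<subseteq> orthogonal_comp S} in
              bij_betw tr_functional P (cone_C G0) \<and>
              (\<forall>A\<in>P. \<forall>B\<in>P. \<forall>t::real. 0 \<le> t \<and> t \<le> 1 \<longrightarrow>
                 tr_functional ((1 - t) *\<^sub>R A + t *\<^sub>R B) =
                 (\<lambda>X. (1 - t) * tr_functional A X + t * tr_functional B X)))"
    proof -
      have "completely_elliptic S \<and> face_generated GN G0 = face_of_subspace S \<and>
          (bij_betw tr_functional P (cone_C G0) \<and>
              (\<forall>A\<in>P. \<forall>B\<in>P. \<forall>t::real. 0 \<le> t \<and> t \<le> 1 \<longrightarrow>
                 tr_functional ((1 - t) *\<^sub>R A + t *\<^sub>R B) =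
                 (\<lambda>X. (1 - t) * tr_functional A X + t * tr_functional B X)))"
        using ce_range[OF G0] face_gen[OF G0] bij affine_part unfolding S_def by blast
      then show ?thesis unfolding P_def Let_def by (rule exI[of _ S])
    qed
  qed
qed


end
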